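(* Suppose that $h^{(n)}$ is a conserved density, homogeneous of degree $n$, for the system $u^i_t = a^i_{jk} u^j u^k_x$. Then the function $h^{(n+1)}$ obtained by the recursion $h^{(n+1)} = a^i_{jk} u^j u^k \frac{\partial h^{(n)}}{\partial u^i}$ is a conserved density if and only if \[ \Delta_{irj}^{~~~s} u^r \frac{\partial h^{(n)}}{\partial u^s} = 0\,. \] Thus for an associative algebra all obstructions vanish.
   Context: Consider the hydrodynamic system $u^i_t = a^i_{jk} u^j u^k_x$, $i,j,k=1,\ldots,N$, with constant $a^i_{jk}$ regarded as structure constants of an algebra ${\cal F}$ with basis $e_i$, $e_i\circ e_j = a^k_{ij} e_k$. The algebra ${\cal F}$ is assumed commutative, to have a unity element $e_1$ ($e_1\circ e_i=e_i$), and to carry a non-degenerate inner product $\eta_{ij}$ satisfying the Frobenius condition $\langle a\circ b,c\rangle=\langle a,b\circ c\rangle$ (equivalently $a_{ijk}$, with indices lowered by $\eta$, is totally symmetric). The system is Hamiltonian with respect to the bracket $\{H,G\}=\int \frac{\delta H}{\delta u^i}\eta^{ij}\frac{d}{dx}\frac{\delta G}{\delta u^j}dx$ and Hamiltonian density $h^{(3)}=\frac{1}{3!}a_{ijk}u^iu^ju^k$. A conserved density $h^{(n)}$ (a hydrodynamic density with $\{H^{(n)},H^{(3)}\}=0$, $H^{(n)}=\int h^{(n)}dx$, under rapidly decreasing or periodic boundary conditions) is one satisfying the overdetermined system $a^i_{jk} u^j \frac{\partial^2 h^{(n)}}{\partial u^i \partial u^p} = a^i_{jp} u^j \frac{\partial^2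 h^{(n)}}{\partial u^i \partial u^k}$; densities are assumed homogeneous of degree $n$, i.e. $u^i\partial_i h^{(n)} = n h^{(n)}$. The associator is $\Delta_{ijk}^{~~~s} = a_{ij}^{~~r} a_{rk}^{~~s} - a_{jk}^{~~r} a_{ir}^{~~s}$, i.e. $(e_i\circ e_j)\circ e_k - e_i\circ(e_j\circ e_k)=\Delta_{ijk}^{~~~s}e_s$. *)

theory Defs
  imports "HOL-Analysis.Analysis"
begin

text \<open>Points u of R^N are vectors u :: real^'n, indices range over the finite type 'n.
  Structure constants: a i j k stands for a^i_{jk}; eta i j for eta_{ij}.\<close>

definition pd :: "'n::finite \<Rightarrow> (real^'n \<Rightarrow> real) \<Rightarrow> real^'n \<Rightarrow> real" where
  "pd i f u = deriv (\<lambda>t. f (u + t *\<^sub>R axis i 1)) 0"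

fun Ck_partial :: "nat \<Rightarrow> (real^'n::finite \<Rightarrow> real) \<Rightarrow> bool" where
  "Ck_partial 0 f = continuous_on UNIV f"
| "Ck_partial (Suc k) f = (continuous_on UNIV f \<and>
     (\<forall>i u. (\<lambda>t. f (u + t *\<^sub>R axis i 1)) differentiable (at 0)) \<and>
     (\<forall>i. Ck_partial k (pd i f)))"

definition smooth_fun :: "(real^'n::finite \<Rightarrow> real) \<Rightarrow> bool" where
  "smooth_fun f \<longleftrightarrow> (\<forall>k. Ck_partial k f)"

definition lower :: "('n::finite \<Rightarrow> 'n \<Rightarrow> real) \<Rightarrow> ('n \<Rightarrow> 'n \<Rightarrow> 'n \<Rightarrow> real) \<Rightarrow> 'n \<Rightarrow> 'n \<Rightarrow> 'n \<Rightarrow> real" where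
  "lower eta a i j k = (\<Sum>l\<in>UNIV. eta i l * a l j k)"

definition frobenius_algebra ::
  "('n::finite \<Rightarrow> 'n \<Rightarrow> 'n \<Rightarrow> real) \<Rightarrow> ('n \<Rightarrow> 'n \<Rightarrow> real) \<Rightarrow> 'n \<Rightarrow> bool" where
  "frobenius_algebra a eta e \<longleftrightarrow>
     (\<forall>i j k. a i j k = a i k j) \<and>
     (\<forall>i j. a i e j = (if i = j then 1 else 0)) \<and>
     (\<forall>i j. eta i j = eta j i) \<and>
     det (\<chi> i j. eta i j) \<noteq> 0 \<and>
     (\<forall>i j k. lower eta a i j k = lower eta a j i k \<and> lower eta a i j k = lower eta a i k j)"

definition conserved_density :: "('n::finite \<Rightarrow> 'n \<Rightarrow> 'n \<Rightarrow> real) \<Rightarrow> (real^'n \<Rightarrow> real) \<Rightarrow> bool" where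
  "conserved_density a h \<longleftrightarrow>
     (\<forall>u k p. (\<Sum>i\<in>UNIV. \<Sum>j\<in>UNIV. a i j k * u$j * pd i (pd p h) u)
            = (\<Sum>i\<in>UNIV. \<Sum>j\<in>UNIV. a i j p * u$j * pd i (pd k h) u))"

definition homogeneous_deg :: "nat \<Rightarrow> (real^'n::finite \<Rightarrow> real) \<Rightarrow> bool" where
  "homogeneous_deg n h \<longleftrightarrow> (\<forall>u. (\<Sum>i\<in>UNIV. u$i * pd i h u) = real n * h u)"

definition assoc :: "('n::finite \<Rightarrow> 'n \<Rightarrow> 'n \<Rightarrow> real) \<Rightarrow> 'n \<Rightarrow> 'n \<Rightarrow> 'n \<Rightarrow> 'n \<Rightarrow> real" where
  "assoc a i j k s = (\<Sum>r\<in>UNIV. a r i j * a s r k - a r j k * a s i r)"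

definition next_density :: "('n::finite \<Rightarrow> 'n \<Rightarrow> 'n \<Rightarrow> real) \<Rightarrow> (real^'n \<Rightarrow> real) \<Rightarrow> real^'n \<Rightarrow> real" where
  "next_density a h u = (\<Sum>i\<in>UNIV. \<Sum>j\<in>UNIV. \<Sum>k\<in>UNIV. a i j k * u$j * u$k * pd i h u)"

end

theory Submission
  imports Defs
begin


lemma smooth_cont: "smooth_fun f \<Longrightarrow> continuous_on UNIV f"
  unfolding smooth_fun_def by (metis Ck_partial.simps(1))

lemma smooth_diff: "smooth_fun f \<Longrightarrow> (\<lambda>t. f (u + t *\<^sub>R axis i 1)) differentiable (at 0)"
  unfolding smooth_fun_def by (metis Ck_partial.simps(2))

lemma smooth_pd: "smooth_fun f \<Longrightarrow> smooth_fun (pd i f)"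
  unfolding smooth_fun_def by (metis Ck_partial.simps(2))

lemma smooth_has0: "smooth_fun f \<Longrightarrow> ((\<lambda>t. f (u + t *\<^sub>R axis i 1)) has_real_derivative pd i f u) (at 0)"
  unfolding pd_def using smooth_diff DERIV_deriv_iff_real_differentiable by blast

lemma smooth_has:
  assumes "smooth_fun f"
  shows "((\<lambda>t. f (u + t *\<^sub>R axis i 1)) has_real_derivative pd i f (u + t0 *\<^sub>R axis i 1)) (at t0)"
proof -
  have "((\<lambda>s. f ((u + t0 *\<^sub>R axis i 1) + s *\<^sub>R axis i 1)) has_real_derivative pd i f (u + t0 *\<^sub>R axis i 1)) (at 0)"
    using smooth_has0[OF assms] .
  moreover have "(\<lambda>s. f ((u + t0 *\<^sub>R axis i 1) + s *\<^sub>R axis i 1)) = (\<lambda>s. (\<lambda>t. f (u + t *\<^sub>R axis i 1)) (s + t0))"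
    by (rule ext) (simp add: scaleR_add_left algebra_simps)
  ultimately show ?thesis using DERIV_shift[of "\<lambda>t. f (u + t *\<^sub>R axis i 1)" _ 0 t0] by simp
qed

lemma pd_eq: "((\<lambda>t. f (u + t *\<^sub>R axis i 1)) has_real_derivative D) (at 0) \<Longrightarrow> pd i f u = D"
  unfolding pd_def by (rule DERIV_imp_deriv)



lemma mvt_line:
  assumes "smooth_fun f" "s > 0"
  shows "\<exists>z. 0 < z \<and> z < s \<and> f (u + s *\<^sub>R axis i 1) - f u = s * pd i f (u + z *\<^sub>R axis i 1)"
proof -
  let ?F = "\<lambda>t. f (u + t *\<^sub>R axis i 1)"
  have d: "\<And>t. (?F has_real_derivative pd i f (u + t *\<^sub>R axis i 1)) (at t)"
    using smooth_has[OF assms(1)] .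
  have c: "continuous_on {0..s} ?F"
    using d DERIV_isCont continuous_at_imp_continuous_on by blast
  have "\<And>x. 0 < x \<Longrightarrow> x < s \<Longrightarrow> ?F differentiable (at x)"
    using d real_differentiable_def by blast
  then obtain l z where "0 < z" "z < s" "DERIV ?F z :> l" "?F s - ?F 0 = (s - 0) * l"
    using MVT[OF assms(2) c] by blast
  moreover have "l = pd i f (u + z *\<^sub>R axis i 1)" using DERIV_unique d calculation(3) by blast
  ultimately show ?thesis by auto
qed

lemma clairaut_pt:
  assumes sm: "smooth_fun f"
  shows "pd j (pd i f) u = pd i (pd j f) u"
proof (rule ccontr)
  assume ne: "pd j (pd i f) u \<noteq> pd i (pd j f) u"
  define d where "d = \<bar>pd j (pd i f) u - pd i (pd j f) u\<bar>"
  have dpos: "d > 0" using ne d_def by auto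
  have c1: "continuous_on UNIV (pd j (pd i f))" using sm smooth_pd smooth_cont by blast
  have c2: "continuous_on UNIV (pd i (pd j f))" using sm smooth_pd smooth_cont by blast
  obtain d1 where d1: "d1 > 0" "\<And>x. dist x u < d1 \<Longrightarrow> dist (pd j (pd i f) x) (pd j (pd i f) u) < d/2"
    using c1 dpos unfolding continuous_on_iff by (metis UNIV_I half_gt_zero)
  obtain d2 where d2: "d2 > 0" "\<And>x. dist x u < d2 \<Longrightarrow> dist (pd i (pd j f) x) (pd i (pd j f) u) < d/2"
    using c2 dpos unfolding continuous_on_iff by (metis UNIV_I half_gt_zero)
  define s where "s = min d1 d2 / 2"
  have spos: "s > 0" using d1 d2 s_def by auto
  define D where "D = f (u + s *\<^sub>R axis i 1 + s *\<^sub>R axis j 1) - f (u + s *\<^sub>R axis i 1) - f (u + s *\<^sub>R axis j 1) + f u"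
  have key: "\<exists>x. norm (x - u) < 2 * s \<and> D = s * s * pd j (pd i f) x"
    if sm: "smooth_fun f" and D: "D = f (u + s *\<^sub>R axis i 1 + s *\<^sub>R axis j 1) - f (u + s *\<^sub>R axis i 1) - f (u + s *\<^sub>R axis j 1) + f u"
    for f i j
  proof -
    define g where "g = (\<lambda>v. f (v + s *\<^sub>R axis j 1) - f v)"
    have sg: "smooth_fun (pd i f)" using sm smooth_pd by blast
    obtain z where z: "0 < z" "z < s" "g (u + s *\<^sub>R axis i 1) - g u = s * (pd i f (u + z *\<^sub>R axis i 1 + s *\<^sub>R axis j 1) - pd i f (u + z *\<^sub>R axis i 1))"
    proof -
      let ?F = "\<lambda>t. g (u + t *\<^sub>R axis i 1)"
      have e: "?F = (\<lambda>t. f ((u + s *\<^sub>R axis j 1) + t *\<^sub>R axis i 1) - f (u + t *\<^sub>R axis i 1))"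
        by (rule ext) (simp add: g_def algebra_simps)
      have d: "\<And>t. (?F has_real_derivative (pd i f (u + t *\<^sub>R axis i 1 + s *\<^sub>R axis j 1) - pd i f (u + t *\<^sub>R axis i 1))) (at t)"
      proof -
        fix t
        have "((\<lambda>t. f ((u + s *\<^sub>R axis j 1) + t *\<^sub>R axis i 1) - f (u + t *\<^sub>R axis i 1)) has_real_derivative (pd i f ((u + s *\<^sub>R axis j 1) + t *\<^sub>R axis i 1) - pd i f (u + t *\<^sub>R axis i 1))) (at t)"
          by (intro DERIV_diff smooth_has sm)
        then show "(?F has_real_derivative (pd i f (u + t *\<^sub>R axis i 1 + s *\<^sub>R axis j 1) - pd i f (u + t *\<^sub>R axis i 1))) (at t)"
          by (simp add: e algebra_simps)
      qed
      have c: "continuous_on {0..s} ?F"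
        using d DERIV_isCont continuous_at_imp_continuous_on by blast
      have "\<And>x. 0 < x \<Longrightarrow> x < s \<Longrightarrow> ?F differentiable (at x)"
        using d real_differentiable_def by blast
      then obtain l z where lz: "0 < z" "z < s" "DERIV ?F z :> l" "?F s - ?F 0 = (s - 0) * l"
        using MVT[OF spos c] by blast
      moreover have "l = pd i f (u + z *\<^sub>R axis i 1 + s *\<^sub>R axis j 1) - pd i f (u + z *\<^sub>R axis i 1)"
        using DERIV_unique d lz(3) by blast
      ultimately show ?thesis using that by auto
    qed
    obtain w where w: "0 < w" "w < s" "pd i f ((u + z *\<^sub>R axis i 1) + s *\<^sub>R axis j 1) - pd i f (u + z *\<^sub>R axis i 1) = s * pd j (pd i f) ((u + z *\<^sub>R axis i 1) + w *\<^sub>R axis j 1)"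
      using mvt_line[OF sg spos] by blast
    have "D = g (u + s *\<^sub>R axis i 1) - g u" by (simp add: D g_def algebra_simps)
    also have "\<dots> = s * s * pd j (pd i f) (u + z *\<^sub>R axis i 1 + w *\<^sub>R axis j 1)"
      using z(3) w(3) by simp
    finally have 1: "D = s * s * pd j (pd i f) (u + z *\<^sub>R axis i 1 + w *\<^sub>R axis j 1)" .
    have "norm ((u + z *\<^sub>R axis i 1 + w *\<^sub>R axis j 1) - u) \<le> norm (z *\<^sub>R axis i (1::real)) + norm (w *\<^sub>R axis j (1::real))"
    proof -
      have "(u + z *\<^sub>R axis i 1 + w *\<^sub>R axis j 1) - u = z *\<^sub>R axis i (1::real) + w *\<^sub>R axis j (1::real)" by simp
      then show ?thesis using norm_triangle_ineq by metis
    qed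
    also have "\<dots> = z + w" using z w by simp
    finally show ?thesis using 1 z w by (intro exI[of _ "u + z *\<^sub>R axis i 1 + w *\<^sub>R axis j 1"]) auto
  qed
  obtain x where x: "norm (x - u) < 2 * s" "D = s * s * pd j (pd i f) x"
    using key[OF sm D_def] by blast
  obtain y where y: "norm (y - u) < 2 * s" "D = s * s * pd i (pd j f) y"
    using key[OF sm, of j i] D_def by (auto simp: algebra_simps)
  have eq: "pd j (pd i f) x = pd i (pd j f) y" using x y spos by simp
  have "dist x u < d1" "dist y u < d2" using x y s_def by (auto simp: dist_norm)
  then have "dist (pd j (pd i f) x) (pd j (pd i f) u) < d/2" "dist (pd i (pd j f) y) (pd i (pd j f) u) < d/2"
    using d1 d2 by auto
  moreover have "\<And>A B a b::real. \<bar>A - a\<bar> < \<bar>a - b\<bar> / 2 \<Longrightarrow> \<bar>B - b\<bar> < \<bar>a - b\<bar> / 2 \<Longrightarrow> A = B \<Longrightarrow> False"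
    by (auto simp: abs_real_def split: if_splits)
  ultimately have "d < d" using eq unfolding d_def dist_real_def by blast
  then show False by simp
qed

lemma clairaut: "smooth_fun f \<Longrightarrow> pd j (pd i f) = pd i (pd j f)"
  using clairaut_pt by blast



lemma DERIV_eqI: "(f has_real_derivative D') F \<Longrightarrow> D' = D \<Longrightarrow> (f has_real_derivative D) F" by simp

lemma coord_has: "((\<lambda>t. (u + t *\<^sub>R axis p 1) $ j) has_real_derivative (if j = p then 1 else 0)) (at 0)"
proof -
  have "(\<lambda>t. (u + t *\<^sub>R axis p 1) $ j) = (\<lambda>t. u $ j + t * (if j = p then 1 else 0))"
    by (rule ext) (simp add: axis_def)
  moreover have "((\<lambda>t. u $ j + t * (if j = p then 1 else 0)) has_real_derivative (if j = p then 1 else 0)) (at 0)"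
    by (auto intro!: derivative_eq_intros)
  ultimately show ?thesis by simp
qed

lemma pd_next:
  assumes sm: "smooth_fun h"
  shows "pd p (next_density a h) u = (\<Sum>i\<in>UNIV. \<Sum>j\<in>UNIV. \<Sum>k\<in>UNIV. a i j k *
     ((if j = p then 1 else 0) * u$k * pd i h u + u$j * (if k = p then 1 else 0) * pd i h u + u$j * u$k * pd p (pd i h) u))"
  unfolding next_density_def
  apply (rule pd_eq)
  apply (rule DERIV_eqI)
   apply ((rule DERIV_sum DERIV_mult DERIV_const coord_has smooth_has0 sm smooth_pd)+)[1]
  apply (simp add: algebra_simps)
  done



lemma mult_if0: "(c::real) * (if P then x else 0) = (if P then c * x else 0)"
  "(if P then x else 0) * (c::real) = (if P then x * c else 0)"
  "(if P then (1::real) else 0) * c = (if P then c else 0)"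
  by auto

lemma sum_if_const: "(\<Sum>k\<in>S. if P then f k else (0::real)) = (if P then (\<Sum>k\<in>S. f k) else 0)"
  by auto

lemmas dsimps = distrib_left distrib_right sum.distrib mult_if0 sum_if_const sum_distrib_left sum_distrib_right

lemma pd_next_clean:
  assumes comm: "\<And>i j k. a i j k = a i k j" and sm: "smooth_fun h"
  shows "pd p (next_density a h) = (\<lambda>u. 2 * (\<Sum>i\<in>UNIV. (\<Sum>j\<in>UNIV. a i j p * u$j) * pd i h u)
      + (\<Sum>i\<in>UNIV. (\<Sum>j\<in>UNIV. \<Sum>k\<in>UNIV. a i j k * u$j * u$k) * pd p (pd i h) u))"
proof
  fix u
  show "pd p (next_density a h) u = 2 * (\<Sum>i\<in>UNIV. (\<Sum>j\<in>UNIV. a i j p * u$j) * pd i h u)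
      + (\<Sum>i\<in>UNIV. (\<Sum>j\<in>UNIV. \<Sum>k\<in>UNIV. a i j k * u$j * u$k) * pd p (pd i h) u)"
    unfolding pd_next[OF sm]
    apply (simp add: dsimps)
    apply (simp only: mult_2 sum.distrib distrib_right)
    apply (simp add: mult.assoc comm[of _ p])
    done
qed

lemma pd_lin:
  assumes sm: "\<And>i. smooth_fun (F i)"
  shows "pd q (\<lambda>u. \<Sum>i\<in>UNIV. \<Sum>j\<in>UNIV. c i j * u$j * F i u) u
     = (\<Sum>i\<in>UNIV. \<Sum>j\<in>UNIV. c i j * ((if j = q then 1 else 0) * F i u + u$j * pd q (F i) u))"
  apply (rule pd_eq)
  apply (rule DERIV_eqI)
   apply ((rule DERIV_sum DERIV_mult DERIV_const coord_has smooth_has0 sm)+)[1]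
  apply (simp add: algebra_simps)
  done

lemma pd_lin1:
  assumes sm: "\<And>i. smooth_fun (F i)"
  shows "pd q (\<lambda>u. \<Sum>i\<in>UNIV. u$i * F i u) u
     = (\<Sum>i\<in>UNIV. ((if i = q then 1 else 0) * F i u + u$i * pd q (F i) u))"
  apply (rule pd_eq)
  apply (rule DERIV_eqI)
   apply ((rule DERIV_sum DERIV_mult DERIV_const coord_has smooth_has0 sm)+)[1]
  apply (simp add: algebra_simps)
  done

lemma pd_cmul:
  assumes sm: "smooth_fun F"
  shows "pd q (\<lambda>u. c * F u) u = c * pd q F u"
  apply (rule pd_eq)
  apply (rule DERIV_eqI)
   apply ((rule DERIV_sum DERIV_mult DERIV_const coord_has smooth_has0 sm)+)[1]
  apply (simp add: algebra_simps)
  done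

lemma pd_S:
  assumes comm: "\<And>i j k. a i j k = a i k j" and sm: "smooth_fun h"
  shows "pd q (pd p (next_density a h)) u =
     2 * (\<Sum>i\<in>UNIV. a i q p * pd i h u) + 2 * (\<Sum>i\<in>UNIV. (\<Sum>j\<in>UNIV. a i j p * u$j) * pd q (pd i h) u)
   + 2 * (\<Sum>i\<in>UNIV. (\<Sum>j\<in>UNIV. a i j q * u$j) * pd p (pd i h) u)
   + (\<Sum>i\<in>UNIV. (\<Sum>j\<in>UNIV. \<Sum>k\<in>UNIV. a i j k * u$j * u$k) * pd q (pd p (pd i h)) u)"
  unfolding pd_next_clean[OF comm sm]
  apply (rule pd_eq)
  apply (rule DERIV_eqI)
   apply ((rule DERIV_add DERIV_sum DERIV_mult DERIV_const coord_has smooth_has0 smooth_pd sm)+)[1]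
  apply (simp add: dsimps)
  apply (simp only: comm[of _ q])
  apply (simp add: mult_ac)
  apply (simp add: sum_distrib_left mult_ac)
  done



lemma obstr_eq:
  fixes a :: "'n::finite \<Rightarrow> 'n \<Rightarrow> 'n \<Rightarrow> real"
  assumes comm: "\<And>i j k. a i j k = a i k j"
    and L: "\<And>i k. L i k = (\<Sum>j\<in>UNIV. a i j k * u$j)"
  shows "(\<Sum>r\<in>UNIV. \<Sum>s\<in>UNIV. assoc a k r p s * u$r * g s) =
     (\<Sum>i\<in>UNIV. L i k * (\<Sum>m\<in>UNIV. a m i p * g m)) - (\<Sum>i\<in>UNIV. L i p * (\<Sum>m\<in>UNIV. a m i k * g m))"
proof -
  have 1: "(\<Sum>i\<in>UNIV. L i k * (\<Sum>m\<in>UNIV. a m i p * g m)) = (\<Sum>r\<in>UNIV. \<Sum>s\<in>UNIV. \<Sum>i\<in>UNIV. a i k r * a s i p * u$r * g s)"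
  proof -
    have "(\<Sum>i\<in>UNIV. L i k * (\<Sum>m\<in>UNIV. a m i p * g m)) = (\<Sum>i\<in>UNIV. \<Sum>r\<in>UNIV. \<Sum>s\<in>UNIV. a i k r * a s i p * u$r * g s)"
      by (simp add: L sum_distrib_left sum_distrib_right comm[of _ _ k] mult_ac)
    also have "\<dots> = (\<Sum>r\<in>UNIV. \<Sum>i\<in>UNIV. \<Sum>s\<in>UNIV. a i k r * a s i p * u$r * g s)"
      by (rule sum.swap)
    also have "\<dots> = (\<Sum>r\<in>UNIV. \<Sum>s\<in>UNIV. \<Sum>i\<in>UNIV. a i k r * a s i p * u$r * g s)"
      by (rule sum.cong[OF refl], rule sum.swap)
    finally show ?thesis .
  qed
  have 2: "(\<Sum>i\<in>UNIV. L i p * (\<Sum>m\<in>UNIV. a m i k * g m)) = (\<Sum>r\<in>UNIV. \<Sum>s\<in>UNIV. \<Sum>i\<in>UNIV. a i r p * a s k i * u$r * g s)"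
  proof -
    have "(\<Sum>i\<in>UNIV. L i p * (\<Sum>m\<in>UNIV. a m i k * g m)) = (\<Sum>i\<in>UNIV. \<Sum>r\<in>UNIV. \<Sum>s\<in>UNIV. a i r p * a s k i * u$r * g s)"
      by (simp add: L sum_distrib_left sum_distrib_right comm[of _ _ k] mult_ac)
    also have "\<dots> = (\<Sum>r\<in>UNIV. \<Sum>i\<in>UNIV. \<Sum>s\<in>UNIV. a i r p * a s k i * u$r * g s)"
      by (rule sum.swap)
    also have "\<dots> = (\<Sum>r\<in>UNIV. \<Sum>s\<in>UNIV. \<Sum>i\<in>UNIV. a i r p * a s k i * u$r * g s)"
      by (rule sum.cong[OF refl], rule sum.swap)
    finally show ?thesis .
  qed
  show ?thesis unfolding 1 2 assoc_def
    by (simp add: sum_distrib_left sum_distrib_right sum_subtractf[symmetric] algebra_simps)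
qed



lemma alg_main:
  fixes a :: "'n::finite \<Rightarrow> 'n \<Rightarrow> 'n \<Rightarrow> real" and u :: "real^'n"
    and g :: "'n \<Rightarrow> real" and H :: "'n \<Rightarrow> 'n \<Rightarrow> real" and T :: "'n \<Rightarrow> 'n \<Rightarrow> 'n \<Rightarrow> real"
    and S :: "'n \<Rightarrow> 'n \<Rightarrow> real" and nr :: real
  assumes comm: "\<And>i j k. a i j k = a i k j"
    and L: "\<And>i k. L i k = (\<Sum>j\<in>UNIV. a i j k * u$j)"
    and V: "\<And>i. V i = (\<Sum>j\<in>UNIV. \<Sum>k\<in>UNIV. a i j k * u$j * u$k)"
    and Hs: "\<And>i j. H i j = H j i"
    and T1: "\<And>i j k. T i j k = T i k j"
    and T2: "\<And>i j k. T i j k = T j i k"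
    and F0: "\<And>k p. (\<Sum>i\<in>UNIV. L i k * H i p) = (\<Sum>i\<in>UNIV. L i p * H i k)"
    and F1: "\<And>q k p. (\<Sum>i\<in>UNIV. a i q k * H i p) + (\<Sum>i\<in>UNIV. L i k * T q i p)
                   = (\<Sum>i\<in>UNIV. a i q p * H i k) + (\<Sum>i\<in>UNIV. L i p * T q i k)"
    and E1: "\<And>p. (\<Sum>i\<in>UNIV. u$i * H p i) = (nr - 1) * g p"
    and E2: "\<And>q p. (\<Sum>i\<in>UNIV. u$i * T q p i) = (nr - 2) * H q p"
    and S: "\<And>q p. S q p = 2 * (\<Sum>i\<in>UNIV. a i q p * g i) + 2 * (\<Sum>i\<in>UNIV. L i p * H q i)
                 + 2 * (\<Sum>i\<in>UNIV. L i q * H p i) + (\<Sum>i\<in>UNIV. V i * T q p i)"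
  shows "(\<Sum>i\<in>UNIV. L i k * S i p) - (\<Sum>i\<in>UNIV. L i p * S i k) =
     (nr + 1) * ((\<Sum>i\<in>UNIV. L i k * (\<Sum>m\<in>UNIV. a m i p * g m)) - (\<Sum>i\<in>UNIV. L i p * (\<Sum>m\<in>UNIV. a m i k * g m)))"
proof -
  define X where "X q p = (\<Sum>i\<in>UNIV. L i p * H q i)" for q p
  define G where "G q p = (\<Sum>i\<in>UNIV. a i q p * g i)" for q p
  have Xs: "X q p = X p q" for q p
    unfolding X_def using F0[of p q] by (simp add: Hs)
  have s1: "(\<Sum>p\<in>UNIV. u$p * (\<Sum>i\<in>UNIV. a i q k * H i p)) = (nr - 1) * G q k" for q k
  proof -
    have "(\<Sum>p\<in>UNIV. u$p * (\<Sum>i\<in>UNIV. a i q k * H i p)) = (\<Sum>p\<in>UNIV. \<Sum>i\<in>UNIV. u$p * (a i q k * H i p))"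
      by (simp add: sum_distrib_left)
    also have "\<dots> = (\<Sum>i\<in>UNIV. \<Sum>p\<in>UNIV. u$p * (a i q k * H i p))" by (rule sum.swap)
    also have "\<dots> = (\<Sum>i\<in>UNIV. a i q k * (\<Sum>p\<in>UNIV. u$p * H i p))"
      by (simp add: sum_distrib_left mult_ac)
    also have "\<dots> = (nr - 1) * G q k" by (simp add: E1 G_def sum_distrib_left mult_ac)
    finally show ?thesis .
  qed
  have s2: "(\<Sum>p\<in>UNIV. u$p * (\<Sum>i\<in>UNIV. L i k * T q i p)) = (nr - 2) * X q k" for q k
  proof -
    have "(\<Sum>p\<in>UNIV. u$p * (\<Sum>i\<in>UNIV. L i k * T q i p)) = (\<Sum>p\<in>UNIV. \<Sum>i\<in>UNIV. u$p * (L i k * T q i p))"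
      by (simp add: sum_distrib_left)
    also have "\<dots> = (\<Sum>i\<in>UNIV. \<Sum>p\<in>UNIV. u$p * (L i k * T q i p))" by (rule sum.swap)
    also have "\<dots> = (\<Sum>i\<in>UNIV. L i k * (\<Sum>p\<in>UNIV. u$p * T q i p))"
      by (simp add: sum_distrib_left mult_ac)
    also have "\<dots> = (nr - 2) * X q k" by (simp add: E2 X_def sum_distrib_left mult_ac)
    finally show ?thesis .
  qed
  have s3: "(\<Sum>p\<in>UNIV. u$p * (\<Sum>i\<in>UNIV. a i q p * H i k)) = X k q" for q k
  proof -
    have "(\<Sum>p\<in>UNIV. u$p * (\<Sum>i\<in>UNIV. a i q p * H i k)) = (\<Sum>p\<in>UNIV. \<Sum>i\<in>UNIV. u$p * (a i q p * H i k))"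
      by (simp add: sum_distrib_left)
    also have "\<dots> = (\<Sum>i\<in>UNIV. \<Sum>p\<in>UNIV. u$p * (a i q p * H i k))" by (rule sum.swap)
    also have "\<dots> = (\<Sum>i\<in>UNIV. (\<Sum>p\<in>UNIV. a i p q * u$p) * H i k)"
      by (simp add: sum_distrib_right sum_distrib_left mult_ac comm[of _ q])
    also have "\<dots> = X k q" by (simp add: X_def L[symmetric] Hs)
    finally show ?thesis .
  qed
  have s4: "(\<Sum>p\<in>UNIV. u$p * (\<Sum>i\<in>UNIV. L i p * T q i k)) = (\<Sum>i\<in>UNIV. V i * T q i k)" for q k
  proof -
    have "(\<Sum>p\<in>UNIV. u$p * (\<Sum>i\<in>UNIV. L i p * T q i k)) = (\<Sum>p\<in>UNIV. \<Sum>i\<in>UNIV. u$p * (L i p * T q i k))"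
      by (simp add: sum_distrib_left)
    also have "\<dots> = (\<Sum>i\<in>UNIV. \<Sum>p\<in>UNIV. u$p * (L i p * T q i k))" by (rule sum.swap)
    also have "\<dots> = (\<Sum>i\<in>UNIV. (\<Sum>p\<in>UNIV. u$p * L i p) * T q i k)"
      by (simp add: sum_distrib_right sum_distrib_left mult_ac)
    also have "\<dots> = (\<Sum>i\<in>UNIV. V i * T q i k)"
    proof (rule sum.cong[OF refl])
      fix i
      have "(\<Sum>p\<in>UNIV. u$p * L i p) = (\<Sum>p\<in>UNIV. \<Sum>j\<in>UNIV. a i j p * u$j * u$p)"
        by (simp add: L sum_distrib_left mult_ac)
      also have "\<dots> = V i" unfolding V by (rule sum.swap)
      finally show "(\<Sum>p\<in>UNIV. u$p * L i p) * T q i k = V i * T q i k" by simp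
    qed
    finally show ?thesis .
  qed
  have W: "(\<Sum>i\<in>UNIV. V i * T q i k) = (nr - 1) * G q k + (nr - 2) * X q k - X k q" for q k
  proof -
    have "(\<Sum>p\<in>UNIV. u$p * ((\<Sum>i\<in>UNIV. a i q k * H i p) + (\<Sum>i\<in>UNIV. L i k * T q i p)))
        = (\<Sum>p\<in>UNIV. u$p * ((\<Sum>i\<in>UNIV. a i q p * H i k) + (\<Sum>i\<in>UNIV. L i p * T q i k)))"
      using F1 by simp
    then show ?thesis
      by (simp only: distrib_left sum.distrib s1 s2 s3 s4)
  qed
  have W2: "(\<Sum>i\<in>UNIV. V i * T q p i) = (nr - 1) * G q p + (nr - 3) * X q p" for q p
  proof -
    have "(\<Sum>i\<in>UNIV. V i * T q p i) = (\<Sum>i\<in>UNIV. V i * T q i p)" using T1 by simp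
    also have "\<dots> = (nr - 1) * G q p + (nr - 2) * X q p - X p q" by (rule W)
    finally show ?thesis using Xs[of p q] by (simp add: algebra_simps)
  qed
  have SS: "S q p = (nr + 1) * (G q p + X q p)" for q p
  proof -
    have "(\<Sum>i\<in>UNIV. L i q * H p i) = X q p" using Xs[of p q] by (simp add: X_def)
    then show ?thesis using S[of q p] W2[of q p] unfolding G_def[symmetric] X_def[symmetric]
      by (simp add: algebra_simps)
  qed
  have Q: "(\<Sum>i\<in>UNIV. L i k * X i p) = (\<Sum>i\<in>UNIV. L i p * X i k)"
  proof -
    have "(\<Sum>i\<in>UNIV. L i k * X i p) = (\<Sum>i\<in>UNIV. \<Sum>m\<in>UNIV. L i k * L m p * H i m)"
      by (simp add: X_def sum_distrib_left mult_ac)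
    also have "\<dots> = (\<Sum>m\<in>UNIV. \<Sum>i\<in>UNIV. L i k * L m p * H i m)" by (rule sum.swap)
    also have "\<dots> = (\<Sum>i\<in>UNIV. L i p * X i k)"
      by (simp add: X_def sum_distrib_left mult_ac Hs)
    finally show ?thesis .
  qed
  have "(\<Sum>i\<in>UNIV. L i k * S i p) - (\<Sum>i\<in>UNIV. L i p * S i k)
     = (nr + 1) * ((\<Sum>i\<in>UNIV. L i k * G i p) - (\<Sum>i\<in>UNIV. L i p * G i k))
       + (nr + 1) * ((\<Sum>i\<in>UNIV. L i k * X i p) - (\<Sum>i\<in>UNIV. L i p * X i k))"
    by (simp add: SS algebra_simps sum.distrib sum_distrib_left sum_subtractf)
  also have "\<dots> = (nr + 1) * ((\<Sum>i\<in>UNIV. L i k * G i p) - (\<Sum>i\<in>UNIV. L i p * G i k))"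
    using Q by simp
  finally show ?thesis by (simp add: G_def)
qed



lemma key:
  fixes a :: "'n::finite \<Rightarrow> 'n \<Rightarrow> 'n \<Rightarrow> real" and h :: "real^'n \<Rightarrow> real"
  assumes comm: "\<And>i j k. a i j k = a i k j"
    and sm: "smooth_fun h"
    and hom: "homogeneous_deg n h"
    and cons: "conserved_density a h"
  shows "(\<Sum>i\<in>UNIV. \<Sum>j\<in>UNIV. a i j k * u$j * pd i (pd p (next_density a h)) u)
       - (\<Sum>i\<in>UNIV. \<Sum>j\<in>UNIV. a i j p * u$j * pd i (pd k (next_density a h)) u)
       = (real n + 1) * (\<Sum>r\<in>UNIV. \<Sum>s\<in>UNIV. assoc a k r p s * u$r * pd s h u)"
proof -
  define L where "L i k = (\<Sum>j\<in>UNIV. a i j k * u$j)" for i k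
  define V where "V i = (\<Sum>j\<in>UNIV. \<Sum>k\<in>UNIV. a i j k * u$j * u$k)" for i
  define g where "g i = pd i h u" for i
  define H where "H i j = pd i (pd j h) u" for i j
  define T where "T i j k = pd i (pd j (pd k h)) u" for i j k
  define S where "S q p = pd q (pd p (next_density a h)) u" for q p
  have smp: "\<And>i. smooth_fun (pd i h)" using sm smooth_pd by blast
  have Hs: "H i j = H j i" for i j unfolding H_def using clairaut[OF sm] by metis
  have T1: "T i j k = T i k j" for i j k unfolding T_def using clairaut[OF sm] by metis
  have T2: "T i j k = T j i k" for i j k unfolding T_def using clairaut[OF smp] by metis
  have F0: "(\<Sum>i\<in>UNIV. L i k * H i p) = (\<Sum>i\<in>UNIV. L i p * H i k)" for k p
    using cons unfolding conserved_density_def L_def H_def by (simp add: sum_distrib_right)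
  have F1: "(\<Sum>i\<in>UNIV. a i q k * H i p) + (\<Sum>i\<in>UNIV. L i k * T q i p)
                   = (\<Sum>i\<in>UNIV. a i q p * H i k) + (\<Sum>i\<in>UNIV. L i p * T q i k)" for q k p
  proof -
    have fe: "(\<lambda>u. \<Sum>i\<in>UNIV. \<Sum>j\<in>UNIV. a i j k * u$j * pd i (pd p h) u)
            = (\<lambda>u. \<Sum>i\<in>UNIV. \<Sum>j\<in>UNIV. a i j p * u$j * pd i (pd k h) u)"
      using cons unfolding conserved_density_def by blast
    have sm2: "\<And>i p. smooth_fun (pd i (pd p h))" using smp smooth_pd by blast
    have "pd q (\<lambda>u. \<Sum>i\<in>UNIV. \<Sum>j\<in>UNIV. a i j k * u$j * pd i (pd p h) u) u
        = pd q (\<lambda>u. \<Sum>i\<in>UNIV. \<Sum>j\<in>UNIV. a i j p * u$j * pd i (pd k h) u) u"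
      by (simp only: fe)
    then show ?thesis
      unfolding pd_lin[OF sm2] L_def H_def T_def
      by (simp add: dsimps mult_ac)
  qed
  have E1f: "(\<Sum>i\<in>UNIV. u$i * pd p (pd i h) u) = (real n - 1) * pd p h u" for u p
  proof -
    have fe: "(\<lambda>u. \<Sum>i\<in>UNIV. u$i * pd i h u) = (\<lambda>u. real n * h u)"
      using hom unfolding homogeneous_deg_def by blast
    have "pd p (\<lambda>u. \<Sum>i\<in>UNIV. u$i * pd i h u) u = pd p (\<lambda>u. real n * h u) u" by (simp only: fe)
    then show ?thesis
      unfolding pd_lin1[OF smp] pd_cmul[OF sm]
      by (simp add: dsimps algebra_simps)
  qed
  have E1: "(\<Sum>i\<in>UNIV. u$i * H p i) = (real n - 1) * g p" for p
    unfolding H_def g_def by (rule E1f)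
  have E2: "(\<Sum>i\<in>UNIV. u$i * T q p i) = (real n - 2) * H q p" for q p
  proof -
    have fe: "(\<lambda>u. \<Sum>i\<in>UNIV. u$i * pd p (pd i h) u) = (\<lambda>u. (real n - 1) * pd p h u)"
      using E1f by blast
    have sm2: "\<And>i. smooth_fun (pd p (pd i h))" using smp smooth_pd by blast
    have "pd q (\<lambda>u. \<Sum>i\<in>UNIV. u$i * pd p (pd i h) u) u = pd q (\<lambda>u. (real n - 1) * pd p h u) u"
      by (simp only: fe)
    then have "H p q + (\<Sum>i\<in>UNIV. u$i * T q p i) = (real n - 1) * H q p"
      unfolding pd_lin1[OF sm2] pd_cmul[OF smp] H_def T_def
      by (simp add: dsimps)
    then show ?thesis using Hs[of p q] by (simp add: algebra_simps)
  qed
  have Sd: "S q p = 2 * (\<Sum>i\<in>UNIV. a i q p * g i) + 2 * (\<Sum>i\<in>UNIV. L i p * H q i)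
                 + 2 * (\<Sum>i\<in>UNIV. L i q * H p i) + (\<Sum>i\<in>UNIV. V i * T q p i)" for q p
    unfolding S_def pd_S[OF comm sm] L_def g_def H_def V_def T_def ..
  have A: "(\<Sum>i\<in>UNIV. L i k * S i p) - (\<Sum>i\<in>UNIV. L i p * S i k) =
     (real n + 1) * ((\<Sum>i\<in>UNIV. L i k * (\<Sum>m\<in>UNIV. a m i p * g m)) - (\<Sum>i\<in>UNIV. L i p * (\<Sum>m\<in>UNIV. a m i k * g m)))"
    by (rule alg_main[OF comm L_def V_def Hs T1 T2 F0 F1 E1 E2 Sd])
  have B: "(\<Sum>r\<in>UNIV. \<Sum>s\<in>UNIV. assoc a k r p s * u$r * g s) =
     (\<Sum>i\<in>UNIV. L i k * (\<Sum>m\<in>UNIV. a m i p * g m)) - (\<Sum>i\<in>UNIV. L i p * (\<Sum>m\<in>UNIV. a m i k * g m))"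
    by (rule obstr_eq[OF comm L_def])
  have C: "(\<Sum>i\<in>UNIV. \<Sum>j\<in>UNIV. a i j k * u$j * pd i (pd p (next_density a h)) u) = (\<Sum>i\<in>UNIV. L i k * S i p)" for k p
    unfolding L_def S_def by (simp add: sum_distrib_right)
  show ?thesis using A B unfolding C g_def by simp
qed

theorem proposition1:
  fixes a :: "'n::finite \<Rightarrow> 'n \<Rightarrow> 'n \<Rightarrow> real"
    and eta :: "'n \<Rightarrow> 'n \<Rightarrow> real"
    and e :: 'n
    and h :: "real^'n \<Rightarrow> real"
    and n :: nat
  assumes "frobenius_algebra a eta e"
    and "smooth_fun h"
    and "homogeneous_deg n h"
    and "conserved_density a h"
  shows "(conserved_density a (next_density a h) \<longleftrightarrow>
           (\<forall>u i j. (\<Sum>r\<in>UNIV. \<Sum>s\<in>UNIV. assoc a i r j s * u$r * pd s h u) = 0))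
       \<and> ((\<forall>i j k s. assoc a i j k s = 0) \<longrightarrow> conserved_density a (next_density a h))"
proof -
  have comm: "\<And>i j k. a i j k = a i k j" using assms(1) unfolding frobenius_algebra_def by blast
  have pos: "real n + 1 \<noteq> 0" by simp
  have iff: "conserved_density a (next_density a h) \<longleftrightarrow>
           (\<forall>u i j. (\<Sum>r\<in>UNIV. \<Sum>s\<in>UNIV. assoc a i r j s * u$r * pd s h u) = 0)"
  proof -
    have "conserved_density a (next_density a h) \<longleftrightarrow>
       (\<forall>u k p. (\<Sum>i\<in>UNIV. \<Sum>j\<in>UNIV. a i j k * u$j * pd i (pd p (next_density a h)) u)
       - (\<Sum>i\<in>UNIV. \<Sum>j\<in>UNIV. a i j p * u$j * pd i (pd k (next_density a h)) u) = 0)"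
      unfolding conserved_density_def by simp
    also have "\<dots> \<longleftrightarrow> (\<forall>u k p. (real n + 1) * (\<Sum>r\<in>UNIV. \<Sum>s\<in>UNIV. assoc a k r p s * u$r * pd s h u) = 0)"
      by (simp only: key[OF comm assms(2-4)])
    also have "\<dots> \<longleftrightarrow> (\<forall>u i j. (\<Sum>r\<in>UNIV. \<Sum>s\<in>UNIV. assoc a i r j s * u$r * pd s h u) = 0)"
      using pos by simp
    finally show ?thesis .
  qed
  show ?thesis using iff by simp
qed

end
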